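(* For every positive integer $n$, $|\mathrm{Sort}_n(\mathrm{SC}_{\underline{32}1})|=M_n$, where $M_n$ is the $n$-th Motzkin number.
   Context: $M_n$ is the number of lattice paths from $(0,0)$ to $(n,0)$ with steps $(1,1)$, $(1,-1)$, $(1,0)$ that never go below the $x$-axis ($M_1=1,M_2=2,M_3=4,\dots$). $\mathfrak S_n$ is the set of permutations of $\{1,\dots,n\}$. A vincular pattern is a permutation with some entries underlined; a sequence contains it if it has a subsequence with the same relative order in which entries corresponding to adjacent underlined entries occupy consecutive positions. An occurrence of $\underline{32}1$ is $a_j a_{j+1} a_l$ with $l>j+1$ and $a_l<a_{j+1}<a_j$. For a pattern $\sigma$, the map $\mathrm{SC}_\sigma$ acts on $\tau$: read entries left to right; when the next entry $x$ is read, if pushing $x$ yields a stack whose entries read top to bottom (stack adjacency = consecutive positions) avoid $\sigma$, push $x$; otherwise pop the top stack entry to the output and repeat. At the end pop all remaining entries; the output is $\mathrm{SC}_\sigma(\tau)$. West's stack-sorting map is $s=\mathrm{SC}_{21}$. $\mathrm{Sort}_n(\mathrm{SC}_\sigma)=\{\tau\in\mathfrak S_n : s(\mathrm{SC}_\sigma(\tau))=12\cdots n\}$. *)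

theory Defs
  imports "HOL-Combinatorics.Multiset_Permutations"
begin

text \<open>Stacks are lists with the top entry first, so a stack read top to bottom
is the list itself. The generic stack map SC takes as parameter the predicate
"the word contains the pattern sigma".\<close>

function sc_aux :: "(nat list \<Rightarrow> bool) \<Rightarrow> nat list \<Rightarrow> nat list \<Rightarrow> nat list" where
  "sc_aux contains [] st = st"
| "sc_aux contains (x # xs) [] = sc_aux contains xs [x]"
| "sc_aux contains (x # xs) (y # st) =
     (if \<not> contains (x # y # st) then sc_aux contains xs (x # y # st)
      else y # sc_aux contains (x # xs) st)"
  by pat_completeness auto
termination
  by (relation "measure (\<lambda>(c, xs, st). 2 * length xs + length st)") auto

definition SC :: "(nat list \<Rightarrow> bool) \<Rightarrow> nat list \<Rightarrow> nat list" where
  "SC contains \<tau> = sc_aux contains \<tau> []"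

definition contains_21 :: "nat list \<Rightarrow> bool" where
  "contains_21 w \<longleftrightarrow> (\<exists>i j. i < j \<and> j < length w \<and> w ! j < w ! i)"

definition contains_32_1 :: "nat list \<Rightarrow> bool" where
  "contains_32_1 w \<longleftrightarrow>
     (\<exists>j l. j + 1 < l \<and> l < length w \<and> w ! l < w ! (j + 1) \<and> w ! (j + 1) < w ! j)"

definition west_s :: "nat list \<Rightarrow> nat list" where
  "west_s = SC contains_21"

definition Sort_set :: "nat \<Rightarrow> (nat list \<Rightarrow> bool) \<Rightarrow> nat list set" where
  "Sort_set n contains =
     {\<tau> \<in> permutations_of_set {1..n}. west_s (SC contains \<tau>) = [1..<n+1]}"

definition motzkin_paths :: "nat \<Rightarrow> int list set" where
  "motzkin_paths n = {p. length p = n \<and> set p \<subseteq> {-1, 0, 1} \<and>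
      (\<forall>k \<le> n. sum_list (take k p) \<ge> 0) \<and> sum_list p = 0}"

definition motzkin :: "nat \<Rightarrow> nat" where
  "motzkin n = card (motzkin_paths n)"

end

theory Submission
  imports Defs
begin


function run :: "(nat list \<Rightarrow> bool) \<Rightarrow> nat list \<Rightarrow> nat list \<Rightarrow> nat list \<times> nat list" where
  "run c [] st = ([], st)"
| "run c (x # xs) [] = run c xs [x]"
| "run c (x # xs) (y # st) =
     (if \<not> c (x # y # st) then run c xs (x # y # st)
      else (let r = run c (x # xs) st in (y # fst r, snd r)))"
  by pat_completeness auto
termination
  by (relation "measure (\<lambda>(c, xs, st). 2 * length xs + length st)") auto

lemma sc_run: "sc_aux c xs st = fst (run c xs st) @ snd (run c xs st)"
  by (induction c xs st rule: run.induct) (auto simp: Let_def)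

lemma run_append:
  "run c (xs @ ys) st =
    (fst (run c xs st) @ fst (run c ys (snd (run c xs st))), snd (run c ys (snd (run c xs st))))"
  by (induction c xs st rule: run.induct) (auto simp: Let_def)

lemma run_mset: "mset (fst (run c xs st)) + mset (snd (run c xs st)) = mset xs + mset st"
  by (induction c xs st rule: run.induct) (auto simp: Let_def)

lemma sc_mset: "mset (SC c xs) = mset xs"
  unfolding SC_def sc_run using run_mset[of c xs "[]"] by simp

lemma run_bottom:
  "\<forall>w. set w \<subseteq> U \<longrightarrow> (c (w @ b) \<longleftrightarrow> c w) \<Longrightarrow> \<forall>x. \<not> c [x] \<Longrightarrow> b \<noteq> [] \<Longrightarrow>
   set xs \<union> set st \<subseteq> U \<Longrightarrow> run c xs (st @ b) = (fst (run c xs st), snd (run c xs st) @ b)"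
proof (induction c xs st rule: run.induct)
  case (1 c st)
  then show ?case by simp
next
  case (2 c x xs)
  obtain y b' where b: "b = y # b'" using 2(4) by (cases b) auto
  have "x \<in> U" using 2(5) by simp
  then have "c ([x] @ b) = c [x]" using 2(2)[rule_format, of "[x]"] by simp
  then have nc: "\<not> c (x # y # b')" using 2(3) b by simp
  have ih: "run c xs ([x] @ b) = (fst (run c xs [x]), snd (run c xs [x]) @ b)"
    by (rule 2(1)) (use 2(2-5) in auto)
  show ?case using nc ih b by simp
next
  case (3 c x xs y st)
  have "set (x # y # st) \<subseteq> U" using 3(6) by auto
  then have e: "c ((x # y # st) @ b) = c (x # y # st)" using 3(3) by blast
  show ?case
  proof (cases "c (x # y # st)")
    case False
    have ih: "run c xs ((x # y # st) @ b) = (fst (run c xs (x # y # st)), snd (run c xs (x # y # st)) @ b)"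
      by (rule 3(1)[OF False]) (use 3(3-6) in auto)
    show ?thesis using ih e False by simp
  next
    case True
    have ih: "run c (x # xs) (st @ b) = (fst (run c (x # xs) st), snd (run c (x # xs) st) @ b)"
      by (rule 3(2)) (use 3(3-6) True in auto)
    show ?thesis using ih e True by (simp add: Let_def)
  qed
qed

lemma run_bottom2_aux:
  "\<forall>x\<in>set xs. \<not> c (x # b) \<Longrightarrow> b \<noteq> [] \<Longrightarrow> 2 * length xs + length st = N \<Longrightarrow>
   \<exists>ou s. run c xs (st @ b) = (ou, s @ b)"
proof (induction N arbitrary: xs st rule: less_induct)
  case (less N)
  show ?case
  proof (cases xs)
    case Nil then show ?thesis by simp
  next
    case (Cons x xs')
    show ?thesis
    proof (cases st)
      case Nil
      obtain y b' where b: "b = y # b'" using less(3) by (cases b) auto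
      have nc: "\<not> c (x # y # b')" using less(2) b Cons by auto
      have ih: "\<exists>ou s. run c xs' ([x] @ b) = (ou, s @ b)"
        by (rule less(1)[of "2 * length xs' + 1"]) (use less(2-4) Cons Nil in auto)
      show ?thesis using nc ih b Cons Nil by simp
    next
      case Cons2: (Cons y st')
      show ?thesis
      proof (cases "c (x # y # st' @ b)")
        case False
        have ih: "\<exists>ou s. run c xs' ((x # y # st') @ b) = (ou, s @ b)"
          by (rule less(1)[of "2 * length xs' + length (x # y # st')"]) (use less(2-4) Cons Cons2 in auto)
        show ?thesis using ih False Cons Cons2 by simp
      next
        case True
        have ih: "\<exists>ou s. run c (x # xs') (st' @ b) = (ou, s @ b)"
          by (rule less(1)[of "2 * length (x # xs') + length st'"]) (use less(2-4) Cons Cons2 in auto)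
        show ?thesis using ih True Cons Cons2 by (auto simp add: Let_def)
      qed
    qed
  qed
qed

lemma run_bottom2:
  "\<forall>x\<in>set xs. \<not> c (x # b) \<Longrightarrow> b \<noteq> [] \<Longrightarrow> \<exists>ou s. run c xs (st @ b) = (ou, s @ b)"
  using run_bottom2_aux by blast

definition sufcl :: "(nat list \<Rightarrow> bool) \<Rightarrow> bool" where
  "sufcl c \<longleftrightarrow> (\<forall>w y. c w \<longrightarrow> c (y # w))"

lemma sufcl_app: "sufcl c \<Longrightarrow> c w \<Longrightarrow> c (zs @ w)"
  by (induction zs) (auto simp: sufcl_def)

lemma run_push:
  "sufcl c \<Longrightarrow> \<not> c (rev xs @ st) \<Longrightarrow> run c xs st = ([], rev xs @ st)"
proof (induction c xs st rule: run.induct)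
  case (1 c st) then show ?case by simp
next
  case (2 c x xs)
  have "run c xs [x] = ([], rev xs @ [x])" by (rule 2(1)) (use 2(2-3) in simp_all)
  then show ?case by simp
next
  case (3 c x xs y st)
  have nc: "\<not> c (x # y # st)" using 3(3,4) sufcl_app[of c "x # y # st" "rev xs"] by auto
  have "run c xs (x # y # st) = ([], rev xs @ x # y # st)" by (rule 3(1)[OF nc]) (use 3(3-4) in simp_all)
  then show ?case using nc by simp
qed

lemma run_nopop: "fst (run c xs st) = [] \<Longrightarrow> snd (run c xs st) = rev xs @ st"
proof (induction c xs st rule: run.induct)
  case (1 c st) then show ?case by simp
next
  case (2 c x xs) then show ?case by simp
next
  case (3 c x xs y st)
  show ?case
  proof (cases "c (x # y # st)")
    case False then show ?thesis using 3 by simp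
  next
    case True then show ?thesis using 3(3) by (simp add: Let_def)
  qed
qed

lemma run_avoid: "sufcl c \<Longrightarrow> \<forall>x. \<not> c [x] \<Longrightarrow> \<not> c st \<Longrightarrow> \<not> c (snd (run c xs st))"
proof (induction c xs st rule: run.induct)
  case (1 c st) then show ?case by simp
next
  case (2 c x xs) then show ?case by simp
next
  case (3 c x xs y st)
  have "\<not> c st" using 3(3,5) unfolding sufcl_def by blast
  show ?case
  proof (cases "c (x # y # st)")
    case False then show ?thesis using 3(1)[OF False] 3(3,4) by simp
  next
    case True
    have "\<not> c (snd (run c (x # xs) st))" using 3(2) True 3(3,4) \<open>\<not> c st\<close> by simp
    then show ?thesis using True by (simp add: Let_def)
  qed
qed

lemma run_last: "\<exists>s. snd (run c [x] st) = x # s"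
  by (induction st) (auto simp: Let_def)



fun c321 :: "nat list \<Rightarrow> bool" where
  "c321 (a # b # rest) = (c321 (b # rest) \<or> (b < a \<and> (\<exists>z\<in>set rest. z < b)))"
| "c321 _ = False"

lemma ex_split_nat: "(\<exists>j::nat. P j) = (P 0 \<or> (\<exists>j. P (Suc j)))"
proof
  assume "\<exists>j. P j"
  then obtain j where "P j" by blast
  then show "P 0 \<or> (\<exists>j. P (Suc j))" by (cases j) auto
qed auto

definition Q321 :: "nat list \<Rightarrow> nat \<Rightarrow> bool" where
  "Q321 w j = (\<exists>l. j + 1 < l \<and> l < length w \<and> w ! l < w ! (j + 1) \<and> w ! (j + 1) < w ! j)"

lemma Q321_Suc: "Q321 (a # w) (Suc j) = Q321 w j"
  unfolding Q321_def by (subst ex_split_nat) simp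

lemma ex_nth_less: "(\<exists>k. k < length rest \<and> rest ! k < b) = (\<exists>z\<in>set rest. z < b)"
  by (metis in_set_conv_nth)

lemma Q321_0: "Q321 (a # b # rest) 0 = (b < a \<and> (\<exists>z\<in>set rest. z < b))"
proof -
  have "Q321 (a # b # rest) 0 = (\<exists>k. k < length rest \<and> rest ! k < b \<and> b < a)"
    unfolding Q321_def by (subst ex_split_nat, subst ex_split_nat) simp
  then show ?thesis using ex_nth_less[of rest b] by blast
qed

lemma contains_32_1_Cons:
  "contains_32_1 (a # b # rest) = (contains_32_1 (b # rest) \<or> (b < a \<and> (\<exists>z\<in>set rest. z < b)))"
proof -
  have d: "contains_32_1 w = (\<exists>j. Q321 w j)" for w unfolding contains_32_1_def Q321_def by blast
  show ?thesis unfolding d by (subst ex_split_nat) (simp add: Q321_Suc Q321_0, blast)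
qed

lemma contains_32_1_short: "length w < 2 \<Longrightarrow> \<not> contains_32_1 w"
  unfolding contains_32_1_def by auto

lemma c321_eq: "contains_32_1 = c321"
proof
  fix w show "contains_32_1 w = c321 w"
  proof (induction w rule: c321.induct)
    case (1 a b rest)
    then show ?case using contains_32_1_Cons by simp
  qed (auto simp: contains_32_1_short)
qed

lemma sufcl_c321: "sufcl c321"
  unfolding sufcl_def
proof (intro allI impI)
  fix w y assume "c321 w"
  then obtain b rest where "w = b # rest" by (cases w) auto
  then show "c321 (y # w)" using \<open>c321 w\<close> by simp
qed

lemma c321_single: "\<not> c321 [x]" by simp

lemma c321_small: "\<forall>z\<in>set b. a < z \<Longrightarrow> c321 (a # b) = c321 b"
  by (cases b) auto

lemma c321_app: "\<forall>a\<in>set w. \<forall>z\<in>set b. a < z \<Longrightarrow> c321 (w @ b) \<longleftrightarrow> c321 w \<or> c321 b"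
proof (induction w)
  case Nil then show ?case by simp
next
  case (Cons a w)
  note IH = Cons.IH and pr = Cons.prems
  show ?case
  proof (cases w)
    case Nil
    have "\<forall>z\<in>set b. a < z" using pr by simp
    then have "c321 (a # b) = c321 b" by (rule c321_small)
    then show ?thesis using Nil by simp
  next
    case wc: (Cons b' rest)
    have e0: "c321 ((a # b' # rest) @ b) = (c321 ((b' # rest) @ b) \<or> (b' < a \<and> (\<exists>z\<in>set (rest @ b). z < b')))" by simp
    have pre: "\<forall>a\<in>set w. \<forall>z\<in>set b. a < z" using pr by simp
    have "\<forall>z\<in>set b. b' < z" using pre wc by simp
    then have "(\<exists>z\<in>set (rest @ b). z < b') = (\<exists>z\<in>set rest. z < b')" by auto
    with e0 have e: "c321 ((a # b' # rest) @ b) = (c321 ((b' # rest) @ b) \<or> (b' < a \<and> (\<exists>z\<in>set rest. z < b')))" by simp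
    have ih: "c321 ((b' # rest) @ b) = (c321 (b' # rest) \<or> c321 b)" using IH[OF pre] wc by simp
    have c: "c321 (a # b' # rest) = (c321 (b' # rest) \<or> (b' < a \<and> (\<exists>z\<in>set rest. z < b')))" by simp
    have "c321 ((a # b' # rest) @ b) = (c321 (a # b' # rest) \<or> c321 b)" using e ih c by blast
    then show ?thesis using wc by simp
  qed
qed

lemma c21_eq: "contains_21 w = (\<not> sorted w)"
  unfolding contains_21_def sorted_iff_nth_mono_less by (auto simp: not_le)

lemma sufcl_c21: "sufcl contains_21"
  unfolding sufcl_def c21_eq by auto

fun g :: "nat \<Rightarrow> nat list \<Rightarrow> bool" where
  "g x [] = False"
| "g x (y # ys) = (if x < y then (\<exists>z\<in>set ys. z < x) else g x ys)"

fun has231 :: "nat list \<Rightarrow> bool" where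
  "has231 [] = False"
| "has231 (x # xs) = (has231 xs \<or> g x xs)"

lemma g_imp: "g x ys \<Longrightarrow> (\<exists>y\<in>set ys. x < y) \<and> (\<exists>z\<in>set ys. z < x)"
  by (induction ys) (auto split: if_splits)

lemma g_app: "g x (xs @ ys) = (g x xs \<or> ((\<exists>y\<in>set xs. x < y) \<and> (\<exists>z\<in>set ys. z < x)) \<or> g x ys)"
proof (induction xs)
  case Nil then show ?case by simp
next
  case (Cons y xs)
  then show ?case using g_imp[of x ys] g_imp[of x xs] by auto
qed

lemma has231_max:
  "\<forall>x\<in>set xs \<union> set ys. x < n \<Longrightarrow>
   has231 (xs @ n # ys) = (has231 xs \<or> has231 ys \<or> (\<exists>a\<in>set xs. \<exists>c\<in>set ys. c < a))"
proof (induction xs)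
  case Nil
  have "\<not> g n ys"
  proof
    assume "g n ys"
    then obtain y where "y \<in> set ys" "n < y" using g_imp[of n ys] by blast
    then show False using Nil by fastforce
  qed
  then show ?case by simp
next
  case (Cons x xs)
  have gx: "g x (xs @ n # ys) = (g x xs \<or> (\<exists>z\<in>set ys. z < x))"
    using Cons(2) g_imp[of x xs] by (auto simp: g_app)
  show ?case using Cons gx by auto
qed

lemma has231_suffix: "has231 ys \<Longrightarrow> has231 (xs @ ys)"
  by (induction xs) auto

lemma has231_triple:
  assumes "p \<in> set P" "q \<in> set B" "q < p" "p < n"
  shows "has231 (P @ Z @ n # B)"
proof -
  obtain P1 P2 where P: "P = P1 @ p # P2" using assms(1) by (meson split_list)
  have "g p (n # B)" using assms by auto
  then have "g p (Z @ n # B)" by (simp add: g_app)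
  then have "g p (P2 @ Z @ n # B)" by (simp add: g_app)
  then have "has231 (p # P2 @ Z @ n # B)" by simp
  then show ?thesis using P has231_suffix[of "p # P2 @ Z @ n # B" P1] by simp
qed

lemma g_min: "\<forall>z\<in>set w. m < z \<Longrightarrow> \<not> g m w"
  using g_imp by fastforce

lemma has231_min: "\<forall>z\<in>set w. m < z \<Longrightarrow> has231 (m # w) = has231 w"
  using g_min by simp



lemma set_run_snd: "set (snd (run c xs st)) \<subseteq> set xs \<union> set st"
proof -
  have "mset (snd (run c xs st)) \<subseteq># mset xs + mset st" using run_mset[of c xs st]
    by (metis mset_subset_eq_add_right)
  then show ?thesis by (metis set_mset_mono set_mset_mset set_mset_union)
qed

lemma set_run_fst: "set (fst (run c xs st)) \<subseteq> set xs \<union> set st"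
proof -
  have "mset (fst (run c xs st)) \<subseteq># mset xs + mset st" using run_mset[of c xs st]
    by (metis mset_subset_eq_add_left)
  then show ?thesis by (metis set_mset_mono set_mset_mset set_mset_union)
qed

lemma run_c21_pop:
  "\<forall>y\<in>set st. y < n \<Longrightarrow>
   run contains_21 (n # R) st = (st @ fst (run contains_21 R [n]), snd (run contains_21 R [n]))"
proof (induction st)
  case Nil then show ?case by simp
next
  case (Cons y st)
  have "contains_21 (n # y # st)" using Cons(2) by (simp add: c21_eq)
  then show ?case using Cons by (simp add: Let_def)
qed

lemma west_def2: "west_s w = fst (run contains_21 w []) @ snd (run contains_21 w [])"
  by (simp add: west_s_def SC_def sc_run)

lemma west_split:
  assumes "\<forall>x\<in>set L \<union> set R. x < n"
  shows "west_s (L @ n # R) = west_s L @ west_s R @ [n]"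
proof -
  define s1 where "s1 = snd (run contains_21 L [])"
  have s1: "\<forall>y\<in>set s1. y < n" using assms set_run_snd[of contains_21 L "[]"] unfolding s1_def by auto
  have b: "run contains_21 R ([] @ [n]) = (fst (run contains_21 R []), snd (run contains_21 R []) @ [n])"
  proof (rule run_bottom[of "set R"])
    show "\<forall>w. set w \<subseteq> set R \<longrightarrow> contains_21 (w @ [n]) = contains_21 w"
      using assms by (auto simp: c21_eq sorted_append less_imp_le)
  qed (auto simp: c21_eq)
  have "run contains_21 (L @ n # R) [] =
     (fst (run contains_21 L []) @ fst (run contains_21 (n # R) s1), snd (run contains_21 (n # R) s1))"
    using run_append[of contains_21 L "n # R" "[]"] unfolding s1_def by simp
  also have "\<dots> = (fst (run contains_21 L []) @ s1 @ fst (run contains_21 R [n]), snd (run contains_21 R [n]))"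
    using run_c21_pop[OF s1] by simp
  finally show ?thesis using b unfolding west_def2 s1_def by simp
qed

lemma west_mset: "mset (west_s w) = mset w"
  unfolding west_s_def by (rule sc_mset)

lemma west_iff: "distinct w \<Longrightarrow> sorted (west_s w) \<longleftrightarrow> \<not> has231 w"
proof (induction "length w" arbitrary: w rule: less_induct)
  case less
  show ?case
  proof (cases "w = []")
    case True
    then show ?thesis by (simp add: west_s_def SC_def)
  next
    case False
    define n where "n = Max (set w)"
    have "n \<in> set w" using False unfolding n_def by simp
    then obtain L R where w: "w = L @ n # R" by (meson split_list)
    have dis: "distinct L" "distinct R" "n \<notin> set L" "n \<notin> set R" "set L \<inter> set R = {}"
      using less(2) w by auto
    have lt: "\<forall>x\<in>set L \<union> set R. x < n"
    proof
      fix x assume x: "x \<in> set L \<union> set R"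
      then have "x \<in> set w" using w by auto
      then have "x \<le> n" unfolding n_def by simp
      moreover have "x \<noteq> n" using x dis by auto
      ultimately show "x < n" by simp
    qed
    have ihL: "sorted (west_s L) = (\<not> has231 L)" using less(1)[of L] dis w by simp
    have ihR: "sorted (west_s R) = (\<not> has231 R)" using less(1)[of R] dis w by simp
    have sL: "set (west_s L) = set L" "set (west_s R) = set R"
      using west_mset by (metis set_mset_mset)+
    have "sorted (west_s w) = sorted (west_s L @ west_s R @ [n])"
      using west_split[OF lt] w by simp
    also have "\<dots> = (sorted (west_s L) \<and> sorted (west_s R) \<and> (\<forall>a\<in>set L. \<forall>c\<in>set R. a \<le> c))"
      using lt sL by (auto simp: sorted_append less_imp_le)
    also have "(\<forall>a\<in>set L. \<forall>c\<in>set R. a \<le> c) = (\<not> (\<exists>a\<in>set L. \<exists>c\<in>set R. c < a))"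
      by (auto simp: not_less)
    finally show ?thesis using has231_max[OF lt] ihL ihR w by auto
  qed
qed



lemma run_inv321:
  "c = c321 \<Longrightarrow> \<not> c st \<Longrightarrow>
   (\<forall>p\<in>set (fst (run c xs st)). \<exists>q\<in>set (snd (run c xs st)). q < p) \<and>
   (\<forall>q\<in>set st. \<exists>q'\<in>set (snd (run c xs st)). q' \<le> q)"
proof (induction c xs st rule: run.induct)
  case (1 c st)
  then show ?case by auto
next
  case (2 c x xs)
  have "\<not> c [x]" using 2(2) by simp
  then show ?case using 2(1)[OF 2(2)] by simp
next
  case (3 c x xs y st)
  show ?case
  proof (cases "c (x # y # st)")
    case False
    note ih = 3(1)[OF False 3(3) False]
    then show ?thesis using False by auto
  next
    case True
    have nst: "\<not> c st" using 3(3,4) sufcl_c321 unfolding sufcl_def by blast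
    note ih = 3(2)[OF iffD2[OF not_not True] 3(3) nst]
    have "c321 (x # y # st)" using True 3(3) by simp
    then have "\<exists>z\<in>set st. z < y" using 3(3,4) by auto
    then obtain z where z: "z \<in> set st" "z < y" by blast
    define r where "r = run c (x # xs) st"
    have ih2: "(\<forall>p\<in>set (fst r). \<exists>q\<in>set (snd r). q < p) \<and> (\<forall>q\<in>set st. \<exists>q'\<in>set (snd r). q' \<le> q)"
      using ih unfolding r_def .
    obtain q' where q': "q' \<in> set (snd r)" "q' \<le> z" using ih2 z by blast
    have e: "run c (x # xs) (y # st) = (y # fst r, snd r)" using True unfolding r_def by (simp add: Let_def)
    have y1: "\<exists>q\<in>set (snd r). q < y" using q' z by (meson le_less_trans)
    have A1: "\<forall>p\<in>set (y # fst r). \<exists>q\<in>set (snd r). q < p" using ih2 y1 by simp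
    have A2: "\<forall>q\<in>set (y # st). \<exists>q'\<in>set (snd r). q' \<le> q" using ih2 y1 by (auto intro: less_imp_le)
    show ?thesis unfolding e using A1 A2 by simp
  qed
qed

lemma SC_split_good:
  assumes lt: "\<forall>x\<in>set L \<union> set R. x < n" and LR: "\<forall>a\<in>set L. \<forall>c\<in>set R. c < a"
    and nc: "\<not> c321 (n # rev L)"
  shows "SC c321 (L @ n # R) = SC c321 R @ n # rev L"
proof -
  have p: "run c321 (L @ [n]) [] = ([], rev (L @ [n]) @ [])"
    by (rule run_push) (use sufcl_c321 nc in auto)
  have b: "run c321 R ([] @ (n # rev L)) = (fst (run c321 R []), snd (run c321 R []) @ (n # rev L))"
  proof (rule run_bottom[of "set R"])
    show "\<forall>w. set w \<subseteq> set R \<longrightarrow> c321 (w @ n # rev L) = c321 w"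
    proof (intro allI impI)
      fix w assume "set w \<subseteq> set R"
      then have "\<forall>a\<in>set w. \<forall>z\<in>set (n # rev L). a < z" using lt LR by auto
      then show "c321 (w @ n # rev L) = c321 w" using c321_app nc by blast
    qed
  qed auto
  have "run c321 ((L @ [n]) @ R) [] = (fst (run c321 R (n # rev L)), snd (run c321 R (n # rev L)))"
    using run_append[of c321 "L @ [n]" R "[]"] p by simp
  then show ?thesis using b unfolding SC_def sc_run by simp
qed

lemma SC_split_bad:
  assumes lt: "\<forall>x\<in>set L \<union> set R. x < n" and dn: "n \<notin> set L"
    and h: "\<not> has231 (SC c321 (L @ n # R))"
  shows "\<not> c321 (n # rev L) \<and> (\<exists>X. set X = set R \<and> SC c321 (L @ n # R) = X @ n # rev L)"
proof -
  define P where "P = fst (run c321 (L @ [n]) [])"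
  define S where "S = snd (run c321 (L @ [n]) [])"
  have runLn: "run c321 (L @ [n]) [] = (P, S)" unfolding P_def S_def by simp
  define S0 where "S0 = snd (run c321 L [])"
  obtain B where B: "snd (run c321 [n] S0) = n # B" using run_last by blast
  have SB: "S = n # B" unfolding S_def using run_append[of c321 L "[n]" "[]"] B unfolding S0_def by simp
  have ncS: "\<not> c321 S" unfolding S_def by (rule run_avoid) (auto simp: sufcl_c321)
  have inv: "\<forall>p\<in>set P. \<exists>q\<in>set S. q < p"
    using run_inv321[of c321 "[]" "L @ [n]"] unfolding P_def S_def by simp
  have msPS: "mset P + mset S = mset (L @ [n])" using run_mset[of c321 "L @ [n]" "[]"] unfolding P_def S_def by simp
  have nP: "n \<notin> set P"
  proof
    assume "n \<in> set P"
    then have c1: "count (mset P) n \<ge> 1" by (simp add: Suc_le_eq)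
    have "count (mset S) n \<ge> 1" using SB by simp
    moreover have "count (mset P + mset S) n = count (mset P) n + count (mset S) n" by (rule count_union)
    ultimately have "count (mset P + mset S) n \<ge> 2" using c1 by linarith
    moreover have "count (mset (L @ [n])) n = 1" using dn by (simp add: count_eq_zero_iff)
    ultimately show False using msPS by simp
  qed
  have PL: "set P \<subseteq> set L"
  proof -
    have "set P \<subseteq> set (L @ [n])" using msPS by (metis Un_upper1 set_mset_mset set_mset_union)
    then show ?thesis using nP by auto
  qed
  have bot: "\<exists>ou s. run c321 R ([] @ (n # B)) = (ou, s @ (n # B))"
  proof (rule run_bottom2)
    show "\<forall>x\<in>set R. \<not> c321 (x # n # B)"
    proof
      fix x assume "x \<in> set R"
      then have "x < n" using lt by auto
      then show "\<not> c321 (x # n # B)" using ncS SB by simp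
    qed
  qed simp
  then obtain ou s where os: "run c321 R (n # B) = (ou, s @ n # B)" by auto
  have msX: "mset (ou @ s) = mset R" using run_mset[of c321 R "n # B"] os by simp
  have "run c321 ((L @ [n]) @ R) [] = (P @ ou, s @ n # B)"
    using run_append[of c321 "L @ [n]" R "[]"] runLn os SB by simp
  then have SCe: "SC c321 (L @ n # R) = P @ (ou @ s) @ n # B" unfolding SC_def sc_run by simp
  have P0: "P = []"
  proof (rule ccontr)
    assume "P \<noteq> []"
    then obtain p where p: "p \<in> set P" by (cases P) auto
    then obtain q where q: "q \<in> set S" "q < p" using inv by blast
    have pn: "p < n" using p PL lt by auto
    then have "q \<in> set B" using q SB by auto
    then have "has231 (P @ (ou @ s) @ n # B)" using has231_triple[OF p _ q(2) pn] by blast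
    then show False using h SCe by simp
  qed
  then have "S = rev (L @ [n]) @ []" using run_nopop[of c321 "L @ [n]" "[]"] unfolding P_def S_def by simp
  then have "B = rev L" using SB by simp
  then show ?thesis using ncS SB SCe P0 msX by (metis append_Nil mset_eq_setD)
qed

theorem SC_char:
  assumes lt: "\<forall>x\<in>set L \<union> set R. x < n" and dis: "distinct (L @ n # R)"
  shows "\<not> has231 (SC c321 (L @ n # R)) \<longleftrightarrow>
    (\<not> c321 (n # rev L) \<and> \<not> has231 (rev L) \<and> \<not> has231 (SC c321 R) \<and> (\<forall>a\<in>set L. \<forall>c\<in>set R. c < a))"
proof
  assume h: "\<not> has231 (SC c321 (L @ n # R))"
  have dn: "n \<notin> set L" using dis by simp
  obtain X where X: "set X = set R" "SC c321 (L @ n # R) = X @ n # rev L" and nc: "\<not> c321 (n # rev L)"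
    using SC_split_bad[OF lt dn h] by blast
  have lt2: "\<forall>x\<in>set X \<union> set (rev L). x < n" using lt X by auto
  have hh: "\<not> has231 X \<and> \<not> has231 (rev L) \<and> \<not> (\<exists>a\<in>set X. \<exists>c\<in>set (rev L). c < a)"
    using h X(2) has231_max[OF lt2] by simp
  have LR: "\<forall>a\<in>set L. \<forall>c\<in>set R. c < a"
  proof (intro ballI)
    fix a c assume a: "a \<in> set L" and c: "c \<in> set R"
    then have "a \<noteq> c" using dis by auto
    moreover have "\<not> a < c" using hh a c X(1) by auto
    ultimately show "c < a" by simp
  qed
  have "SC c321 (L @ n # R) = SC c321 R @ n # rev L" using SC_split_good[OF lt LR nc] .
  then have "\<not> has231 (SC c321 R)" using h has231_suffix[of "SC c321 R" "[]"]
    by (metis has231_max lt2 X(2) append_same_eq hh)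
  then show "\<not> c321 (n # rev L) \<and> \<not> has231 (rev L) \<and> \<not> has231 (SC c321 R) \<and> (\<forall>a\<in>set L. \<forall>c\<in>set R. c < a)"
    using nc hh LR by simp
next
  assume a: "\<not> c321 (n # rev L) \<and> \<not> has231 (rev L) \<and> \<not> has231 (SC c321 R) \<and> (\<forall>a\<in>set L. \<forall>c\<in>set R. c < a)"
  then have e: "SC c321 (L @ n # R) = SC c321 R @ n # rev L" using SC_split_good[OF lt] by blast
  have sR: "set (SC c321 R) = set R" using sc_mset by (metis set_mset_mset)
  have lt2: "\<forall>x\<in>set (SC c321 R) \<union> set (rev L). x < n" using lt sR by auto
  show "\<not> has231 (SC c321 (L @ n # R))" unfolding e has231_max[OF lt2] using a sR by fastforce
qed



fun Mz :: "nat \<Rightarrow> nat" where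
  "Mz 0 = 1"
| "Mz (Suc n) = Mz n + (\<Sum>k<n. Mz k * Mz (n - 1 - k))"

definition Hh :: "nat \<Rightarrow> nat" where
  "Hh j = (if j = 0 then 1 else Mz (j - 1))"

lemma Mz_conv: "Mz (Suc n) = (\<Sum>k\<le>n. Mz k * Hh (n - k))"
proof -
  have "(\<Sum>k\<le>n. Mz k * Hh (n - k)) = (\<Sum>k<n. Mz k * Hh (n - k)) + Mz n * Hh 0"
    by (simp add: lessThan_Suc_atMost[symmetric])
  also have "(\<Sum>k<n. Mz k * Hh (n - k)) = (\<Sum>k<n. Mz k * Mz (n - 1 - k))"
    by (rule sum.cong) (auto simp: Hh_def)
  finally show ?thesis by (simp add: Hh_def)
qed

lemma split_sorted:
  "sorted_wrt (<) (l :: nat list) \<Longrightarrow> set l = A \<union> B \<Longrightarrow> \<forall>a\<in>A. \<forall>b\<in>B. a < b \<Longrightarrow>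
   A = set (take (card A) l) \<and> B = set (drop (card A) l)"
proof (induction l arbitrary: A B)
  case Nil then show ?case by simp
next
  case (Cons x l)
  have xl2: "\<forall>y\<in>set l. x < y" using Cons(2) by auto
  then have xl: "x \<notin> set l" "\<forall>y\<in>set l. x < y" by auto
  show ?case
  proof (cases "x \<in> A")
    case True
    have xB: "x \<notin> B" using True Cons(4) by blast
    have sl: "sorted_wrt (<) l" using Cons(2) by simp
    have s1: "set l = (A - {x}) \<union> B" using Cons(3) xl xB by auto
    have s2: "\<forall>a\<in>A - {x}. \<forall>b\<in>B. a < b" using Cons(4) by blast
    note ih = Cons(1)[OF sl s1 s2]
    have "A \<subseteq> set (x # l)" using Cons(3) by blast
    then have fA: "finite A" using finite_subset by blast
    have cA: "card A = Suc (card (A - {x}))" using True fA by (metis card_Suc_Diff1)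
    have "set (take (card A) (x # l)) = insert x (set (take (card (A - {x})) l))" using cA by simp
    also have "\<dots> = A" using ih True by blast
    finally have 1: "A = set (take (card A) (x # l))" ..
    have "drop (card A) (x # l) = drop (card (A - {x})) l" using cA by simp
    then show ?thesis using 1 ih by simp
  next
    case False
    have "A = {}"
    proof (rule ccontr)
      assume "A \<noteq> {}"
      then obtain a where a: "a \<in> A" by blast
      then have "a \<in> set l" using Cons(3) False by auto
      then have "x < a" using xl by auto
      moreover have "x \<in> B" using Cons(3) False by auto
      ultimately show False using Cons(4) a by (meson less_asym)
    qed
    then show ?thesis using Cons(3) by simp
  qed
qed

lemma card_concat:
  assumes "finite X" "finite Y" "\<forall>xs\<in>X. length xs = k"
  shows "card {xs @ c # ys | xs ys. xs \<in> X \<and> ys \<in> Y} = card X * card Y"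
proof -
  have e: "{xs @ c # ys | xs ys. xs \<in> X \<and> ys \<in> Y} = (\<lambda>(xs, ys). xs @ c # ys) ` (X \<times> Y)" by auto
  have "inj_on (\<lambda>(xs, ys). xs @ c # ys) (X \<times> Y)"
  proof (rule inj_onI)
    fix a b assume a: "a \<in> X \<times> Y" and b: "b \<in> X \<times> Y"
      and e: "(\<lambda>(xs, ys). xs @ c # ys) a = (\<lambda>(xs, ys). xs @ c # ys) b"
    obtain xs ys where A: "a = (xs, ys)" by (cases a)
    obtain xs' ys' where B: "b = (xs', ys')" by (cases b)
    have "length xs = length xs'" using a b A B assms(3) by auto
    moreover have "xs @ c # ys = xs' @ c # ys'" using e A B by simp
    ultimately show "a = b" using A B by simp
  qed
  then show ?thesis unfolding e by (simp add: card_image card_cartesian_product)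
qed

lemma card_UN_concat:
  assumes K: "finite K" "inj_on \<phi> K"
    and fin: "\<forall>k\<in>K. finite (X k) \<and> finite (Y k)"
    and len: "\<forall>k\<in>K. \<forall>xs\<in>X k. length xs = \<phi> k \<and> c \<notin> set xs"
  shows "card (\<Union>k\<in>K. {xs @ c # ys | xs ys. xs \<in> X k \<and> ys \<in> Y k}) = (\<Sum>k\<in>K. card (X k) * card (Y k))"
proof -
  have "card (\<Union>k\<in>K. {xs @ c # ys | xs ys. xs \<in> X k \<and> ys \<in> Y k}) =
        (\<Sum>k\<in>K. card {xs @ c # ys | xs ys. xs \<in> X k \<and> ys \<in> Y k})"
  proof (rule card_UN_disjoint)
    show "\<forall>i\<in>K. finite {xs @ c # ys |xs ys. xs \<in> X i \<and> ys \<in> Y i}"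
    proof
      fix i assume i: "i \<in> K"
      have "{xs @ c # ys |xs ys. xs \<in> X i \<and> ys \<in> Y i} = (\<lambda>(xs, ys). xs @ c # ys) ` (X i \<times> Y i)" by auto
      then show "finite {xs @ c # ys |xs ys. xs \<in> X i \<and> ys \<in> Y i}" using fin i by simp
    qed
    show "\<forall>i\<in>K. \<forall>j\<in>K. i \<noteq> j \<longrightarrow>
      {xs @ c # ys |xs ys. xs \<in> X i \<and> ys \<in> Y i} \<inter> {xs @ c # ys |xs ys. xs \<in> X j \<and> ys \<in> Y j} = {}"
    proof (intro ballI impI)
      fix i j assume ij: "i \<in> K" "j \<in> K" "i \<noteq> j"
      show "{xs @ c # ys |xs ys. xs \<in> X i \<and> ys \<in> Y i} \<inter> {xs @ c # ys |xs ys. xs \<in> X j \<and> ys \<in> Y j} = {}"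
      proof (rule ccontr)
        assume "{xs @ c # ys |xs ys. xs \<in> X i \<and> ys \<in> Y i} \<inter> {xs @ c # ys |xs ys. xs \<in> X j \<and> ys \<in> Y j} \<noteq> {}"
        then obtain xs ys xs' ys' where w: "xs @ c # ys = xs' @ c # ys'" "xs \<in> X i" "ys \<in> Y i" "xs' \<in> X j" "ys' \<in> Y j"
          by blast
        have c1: "c \<notin> set xs" "c \<notin> set xs'" using len w ij by auto
        have "takeWhile (\<lambda>x. x \<noteq> c) (xs @ c # ys) = xs" using c1 by (simp add: takeWhile_append)
        moreover have "takeWhile (\<lambda>x. x \<noteq> c) (xs' @ c # ys') = xs'" using c1 by (simp add: takeWhile_append)
        ultimately have "xs = xs'" using w(1) by simp
        moreover have "length xs = \<phi> i" using len ij(1) w(2) by blast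
        moreover have "length xs' = \<phi> j" using len ij(2) w(4) by blast
        ultimately have "\<phi> i = \<phi> j" by simp
        then show False using inj_onD[OF K(2) _ ij(1) ij(2)] ij(3) by blast
      qed
    qed
  qed (use K in simp)
  also have "\<dots> = (\<Sum>k\<in>K. card (X k) * card (Y k))"
  proof (rule sum.cong)
    fix k assume k: "k \<in> K"
    show "card {xs @ c # ys |xs ys. xs \<in> X k \<and> ys \<in> Y k} = card (X k) * card (Y k)"
      by (rule card_concat) (use fin len k in auto)
  qed simp
  finally show ?thesis .
qed



definition TS :: "nat set \<Rightarrow> nat list set" where
  "TS S = {w \<in> permutations_of_set S. \<not> c321 w \<and> \<not> has231 w}"

definition HS :: "nat \<Rightarrow> nat set \<Rightarrow> nat list set" where
  "HS M S = {w \<in> permutations_of_set S. \<not> c321 (M # w) \<and> \<not> has231 w}"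

definition GS :: "nat set \<Rightarrow> nat list set" where
  "GS S = {w \<in> permutations_of_set S. \<not> has231 (SC c321 w)}"

lemma perm_split:
  assumes "w \<in> permutations_of_set S" "M \<in> S"
  shows "\<exists>xs ys. w = xs @ M # ys \<and> distinct xs \<and> distinct ys \<and> set xs \<inter> set ys = {} \<and>
     set xs \<union> set ys = S - {M} \<and> M \<notin> set xs \<and> M \<notin> set ys"
proof -
  have w: "set w = S" "distinct w" using assms(1) by (auto simp: permutations_of_set_def)
  then have "M \<in> set w" using assms(2) by simp
  then obtain xs ys where e: "w = xs @ M # ys" by (meson split_list)
  have d: "distinct xs" "distinct ys" "set xs \<inter> set ys = {}" "M \<notin> set xs" "M \<notin> set ys"
    using w(2) e by auto
  have "set xs \<union> set ys = S - {M}" using w(1) e d by auto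
  then show ?thesis using e d by blast
qed

lemma assemble:
  assumes "distinct xs" "distinct ys" "set xs \<inter> set ys = {}" "M \<notin> set xs" "M \<notin> set ys"
    "set xs \<union> set ys = S - {M}" "M \<in> S"
  shows "xs @ M # ys \<in> permutations_of_set S"
  using assms by (auto simp: permutations_of_set_def)

lemma sl_facts:
  assumes "finite S'" "l = sorted_list_of_set S'"
  shows "sorted_wrt (<) l" "set l = S'" "distinct l" "length l = card S'"
  using assms by (auto simp: strict_sorted_list_of_set)

lemma take_drop_facts:
  assumes "sorted_wrt (<) (l :: nat list)" "distinct l"
  shows "set (take k l) \<union> set (drop k l) = set l"
    "set (take k l) \<inter> set (drop k l) = {}"
    "\<forall>a\<in>set (take k l). \<forall>b\<in>set (drop k l). a < b"
    "k \<le> length l \<Longrightarrow> card (set (take k l)) = k"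
    "k \<le> length l \<Longrightarrow> card (set (drop k l)) = length l - k"
proof -
  show "set (take k l) \<union> set (drop k l) = set l" by (metis append_take_drop_id set_append)
  show "set (take k l) \<inter> set (drop k l) = {}" using assms(2) set_take_disj_set_drop_if_distinct by blast
  have "sorted_wrt (<) (take k l @ drop k l)" using assms(1) by simp
  then show "\<forall>a\<in>set (take k l). \<forall>b\<in>set (drop k l). a < b" unfolding sorted_wrt_append by blast
  show "k \<le> length l \<Longrightarrow> card (set (take k l)) = k"
    using assms(2) by (simp add: distinct_card)
  show "k \<le> length l \<Longrightarrow> card (set (drop k l)) = length l - k"
    using assms(2) by (simp add: distinct_card)
qed

lemma lowhigh:
  assumes "sorted_wrt (<) (l :: nat list)" "set l = set A \<union> set B" "\<forall>a\<in>set A. \<forall>b\<in>set B. a < b"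
    "distinct A"
  shows "length A \<le> length l \<and> set A = set (take (length A) l) \<and> set B = set (drop (length A) l)"
proof -
  have "card (set A) = length A" using assms(4) by (simp add: distinct_card)
  moreover have "length l = card (set l)" using assms(1) by (simp add: distinct_card strict_sorted_iff)
  moreover have "card (set A) \<le> card (set l)" using assms(2) by (simp add: card_mono)
  ultimately show ?thesis using split_sorted[OF assms(1,2,3)] by simp
qed



lemma max_facts:
  assumes "finite S" "S \<noteq> {}" "M = Max S"
  shows "M \<in> S" "\<forall>x\<in>S - {M}. x < M"
proof -
  show "M \<in> S" using assms by simp
  show "\<forall>x\<in>S - {M}. x < M"
  proof
    fix x assume x: "x \<in> S - {M}"
    then have "x \<le> M" using assms by simp
    then show "x < M" using x by auto
  qed
qed

lemma TS_decomp:
  assumes fin: "finite S" and ne: "S \<noteq> {}" and M: "M = Max S" and l: "l = sorted_list_of_set (S - {M})"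
  shows "TS S = (\<Union>k\<in>{..length l}. {xs @ M # ys | xs ys. xs \<in> TS (set (take k l)) \<and> ys \<in> HS M (set (drop k l))})"
proof (rule set_eqI, rule iffI)
  have MS: "M \<in> S" and lt: "\<forall>x\<in>S - {M}. x < M" using max_facts[OF fin ne M] by auto
  note slf = sl_facts[of "S - {M}" l] fin l
  have sl: "sorted_wrt (<) l" "set l = S - {M}" "distinct l" using slf by auto
  {
    fix w assume w: "w \<in> TS S"
    then have wp: "w \<in> permutations_of_set S" and wc: "\<not> c321 w" "\<not> has231 w" unfolding TS_def by auto
    obtain xs ys where e: "w = xs @ M # ys" and d: "distinct xs" "distinct ys" "set xs \<inter> set ys = {}"
      "set xs \<union> set ys = S - {M}" "M \<notin> set xs" "M \<notin> set ys"
      using perm_split[OF wp MS] by blast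
    have lt2: "\<forall>x\<in>set xs \<union> set ys. x < M" using lt d(4) by blast
    have h: "\<not> has231 xs" "\<not> has231 ys" "\<not> (\<exists>a\<in>set xs. \<exists>c\<in>set ys. c < a)"
      using wc(2) has231_max[OF lt2] e by auto
    have xy: "\<forall>a\<in>set xs. \<forall>b\<in>set ys. a < b"
    proof (intro ballI)
      fix a b assume a: "a \<in> set xs" and b: "b \<in> set ys"
      then have "a \<noteq> b" using d(3) by blast
      then show "a < b" using h(3) a b by force
    qed
    have "\<forall>a\<in>set xs. \<forall>z\<in>set (M # ys). a < z" using xy lt2 by auto
    then have cc: "\<not> c321 xs" "\<not> c321 (M # ys)" using c321_app[of xs "M # ys"] wc(1) e by auto
    have lh: "length xs \<le> length l \<and> set xs = set (take (length xs) l) \<and> set ys = set (drop (length xs) l)"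
      by (rule lowhigh) (use sl d xy in auto)
    have "xs \<in> TS (set (take (length xs) l))" unfolding TS_def permutations_of_set_def using lh d h cc by auto
    moreover have "ys \<in> HS M (set (drop (length xs) l))" unfolding HS_def permutations_of_set_def using lh d h cc by auto
    ultimately show "w \<in> (\<Union>k\<in>{..length l}. {xs @ M # ys | xs ys. xs \<in> TS (set (take k l)) \<and> ys \<in> HS M (set (drop k l))})"
      using e lh by blast
  }
  {
    fix w assume "w \<in> (\<Union>k\<in>{..length l}. {xs @ M # ys | xs ys. xs \<in> TS (set (take k l)) \<and> ys \<in> HS M (set (drop k l))})"
    then obtain k xs ys where k: "k \<le> length l" and e: "w = xs @ M # ys"
      and xs: "xs \<in> TS (set (take k l))" and ys: "ys \<in> HS M (set (drop k l))" by auto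
    have xs': "set xs = set (take k l)" "distinct xs" "\<not> c321 xs" "\<not> has231 xs"
      using xs unfolding TS_def permutations_of_set_def by auto
    have ys': "set ys = set (drop k l)" "distinct ys" "\<not> c321 (M # ys)" "\<not> has231 ys"
      using ys unfolding HS_def permutations_of_set_def by auto
    note td = take_drop_facts[OF sl(1) sl(3), of k]
    have un: "set xs \<union> set ys = S - {M}" using td(1) xs'(1) ys'(1) sl(2) by simp
    have lt2: "\<forall>x\<in>set xs \<union> set ys. x < M" using un lt by blast
    have Mn: "M \<notin> set xs" "M \<notin> set ys" using lt2 by auto
    have perm: "w \<in> permutations_of_set S" unfolding e
      by (rule assemble) (use xs' ys' td Mn un MS in auto)
    have xy: "\<forall>a\<in>set xs. \<forall>b\<in>set ys. a < b" using td(3) xs'(1) ys'(1) by simp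
    have nh: "\<not> has231 w" unfolding e has231_max[OF lt2] using xs' ys' xy by force
    have "\<forall>a\<in>set xs. \<forall>z\<in>set (M # ys). a < z" using xy lt2 by auto
    then have nc: "\<not> c321 w" unfolding e using c321_app[of xs "M # ys"] xs' ys' by simp
    show "w \<in> TS S" unfolding TS_def using perm nh nc by simp
  }
qed



lemma GS_decomp:
  assumes fin: "finite S" and ne: "S \<noteq> {}" and M: "M = Max S" and l: "l = sorted_list_of_set (S - {M})"
  shows "GS S = (\<Union>k\<in>{..length l}. {xs @ M # ys | xs ys. xs \<in> rev ` HS M (set (drop k l)) \<and> ys \<in> GS (set (take k l))})"
proof (rule set_eqI, rule iffI)
  have MS: "M \<in> S" and lt: "\<forall>x\<in>S - {M}. x < M" using max_facts[OF fin ne M] by auto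
  note slf = sl_facts[of "S - {M}" l] fin l
  have sl: "sorted_wrt (<) l" "set l = S - {M}" "distinct l" using slf by auto
  {
    fix w assume w: "w \<in> GS S"
    then have wp: "w \<in> permutations_of_set S" and wc: "\<not> has231 (SC c321 w)" unfolding GS_def by auto
    obtain xs ys where e: "w = xs @ M # ys" and d: "distinct xs" "distinct ys" "set xs \<inter> set ys = {}"
      "set xs \<union> set ys = S - {M}" "M \<notin> set xs" "M \<notin> set ys"
      using perm_split[OF wp MS] by blast
    have lt2: "\<forall>x\<in>set xs \<union> set ys. x < M" using lt d(4) by blast
    have dis: "distinct (xs @ M # ys)" using wp e unfolding permutations_of_set_def by simp
    have ch: "\<not> c321 (M # rev xs) \<and> \<not> has231 (rev xs) \<and> \<not> has231 (SC c321 ys) \<and> (\<forall>a\<in>set xs. \<forall>c\<in>set ys. c < a)"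
      using SC_char[OF lt2 dis] wc e by simp
    have lh: "length ys \<le> length l \<and> set ys = set (take (length ys) l) \<and> set xs = set (drop (length ys) l)"
      by (rule lowhigh) (use sl d ch in auto)
    have "rev xs \<in> HS M (set (drop (length ys) l))" unfolding HS_def permutations_of_set_def using lh d ch by auto
    then have "xs \<in> rev ` HS M (set (drop (length ys) l))" by (metis image_eqI rev_rev_ident)
    moreover have "ys \<in> GS (set (take (length ys) l))" unfolding GS_def permutations_of_set_def using lh d ch by auto
    ultimately show "w \<in> (\<Union>k\<in>{..length l}. {xs @ M # ys | xs ys. xs \<in> rev ` HS M (set (drop k l)) \<and> ys \<in> GS (set (take k l))})"
      using e lh by blast
  }
  {
    fix w assume "w \<in> (\<Union>k\<in>{..length l}. {xs @ M # ys | xs ys. xs \<in> rev ` HS M (set (drop k l)) \<and> ys \<in> GS (set (take k l))})"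
    then obtain k xs ys where k: "k \<le> length l" and e: "w = xs @ M # ys"
      and xs: "xs \<in> rev ` HS M (set (drop k l))" and ys: "ys \<in> GS (set (take k l))" by auto
    obtain u where u: "u \<in> HS M (set (drop k l))" "xs = rev u" using xs by blast
    have xs': "set xs = set (drop k l)" "distinct xs" "\<not> c321 (M # rev xs)" "\<not> has231 (rev xs)"
      using u unfolding HS_def permutations_of_set_def by auto
    have ys': "set ys = set (take k l)" "distinct ys" "\<not> has231 (SC c321 ys)"
      using ys unfolding GS_def permutations_of_set_def by auto
    note td = take_drop_facts[OF sl(1) sl(3), of k]
    have un: "set xs \<union> set ys = S - {M}" using td(1) xs'(1) ys'(1) sl(2) by auto
    have lt2: "\<forall>x\<in>set xs \<union> set ys. x < M" using un lt by blast
    have Mn: "M \<notin> set xs" "M \<notin> set ys" using lt2 by auto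
    have perm: "w \<in> permutations_of_set S" unfolding e
      by (rule assemble) (use xs' ys' td Mn un MS in auto)
    have dis: "distinct (xs @ M # ys)" using perm e unfolding permutations_of_set_def by simp
    have xy: "\<forall>a\<in>set xs. \<forall>c\<in>set ys. c < a" using td(3) xs'(1) ys'(1) by simp
    have nh: "\<not> has231 (SC c321 w)" unfolding e using SC_char[OF lt2 dis] xs' ys' xy by simp
    show "w \<in> GS S" unfolding GS_def using perm nh by simp
  }
qed

lemma HS_decomp:
  assumes fin: "finite S'" and ne: "S' \<noteq> {}" and lt: "\<forall>x\<in>S'. x < M" and m0: "m0 = Min S'"
  shows "HS M S' = (\<lambda>w. m0 # w) ` TS (S' - {m0})"
proof (rule set_eqI, rule iffI)
  have m0S: "m0 \<in> S'" using fin ne m0 by simp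
  have m0le: "\<forall>x\<in>S'. m0 \<le> x" using fin m0 by simp
  {
    fix w assume w: "w \<in> HS M S'"
    then have ws: "set w = S'" "distinct w" "\<not> c321 (M # w)" "\<not> has231 w"
      unfolding HS_def permutations_of_set_def by auto
    then obtain y w' where e: "w = y # w'" using ne by (cases w) auto
    have yS: "y \<in> S'" using ws e by auto
    have yM: "y < M" using lt yS by auto
    have c: "\<not> c321 (y # w') \<and> \<not> (\<exists>z\<in>set w'. z < y)" using ws(3) e yM by simp
    have "y = m0"
    proof (rule ccontr)
      assume "y \<noteq> m0"
      then have "m0 \<in> set w'" using m0S ws e by auto
      moreover have "m0 < y" using m0le yS \<open>y \<noteq> m0\<close> by force
      ultimately show False using c by blast
    qed
    have w'1: "set w' = S' - {m0}" "distinct w'" using ws e \<open>y = m0\<close> by auto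
    have w'2: "\<not> c321 w'" using c sufcl_c321 unfolding sufcl_def by blast
    have w'3: "\<not> has231 w'" using ws(4) e by simp
    have "w' \<in> TS (S' - {m0})" unfolding TS_def permutations_of_set_def using w'1 w'2 w'3 by simp
    then show "w \<in> (\<lambda>w. m0 # w) ` TS (S' - {m0})" using e \<open>y = m0\<close> by blast
  }
  {
    fix w assume "w \<in> (\<lambda>w. m0 # w) ` TS (S' - {m0})"
    then obtain w' where e: "w = m0 # w'" and w': "w' \<in> TS (S' - {m0})" by blast
    have w'1: "set w' = S' - {m0}" "distinct w'" "\<not> c321 w'" "\<not> has231 w'"
      using w' unfolding TS_def permutations_of_set_def by auto
    have gt: "\<forall>z\<in>set w'. m0 < z" using w'1(1) m0le by force
    have perm: "w \<in> permutations_of_set S'" unfolding e permutations_of_set_def using w'1 m0S by auto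
    have "c321 (m0 # w') = c321 w'" using c321_small gt by blast
    then have "\<not> c321 (M # w)" unfolding e using w'1 gt by (auto simp: not_less less_imp_le)
    moreover have "\<not> has231 w" unfolding e using has231_min[OF gt] w'1 by simp
    ultimately show "w \<in> HS M S'" unfolding HS_def using perm by simp
  }
qed



lemma finite_TS: "finite (TS S)" unfolding TS_def by simp
lemma finite_HS: "finite (HS M S)" unfolding HS_def by simp
lemma finite_GS: "finite (GS S)" unfolding GS_def by simp

lemma TS_empty: "TS {} = {[]}" unfolding TS_def by auto
lemma HS_empty: "HS M {} = {[]}" unfolding HS_def by auto
lemma GS_empty: "GS {} = {[]}" unfolding GS_def by (auto simp add: SC_def)

lemma card_HS_gen:
  assumes fin: "finite D" and lt: "\<forall>x\<in>D. x < M"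
    and IH: "\<forall>S'. finite S' \<and> card S' < card D \<longrightarrow> card (TS S') = Mz (card S')"
  shows "card (HS M D) = Hh (card D)"
proof (cases "D = {}")
  case True
  then show ?thesis by (simp add: HS_empty Hh_def)
next
  case False
  define m0 where "m0 = Min D"
  have e: "HS M D = (\<lambda>w. m0 # w) ` TS (D - {m0})" using HS_decomp[OF fin False lt m0_def] .
  have m0D: "m0 \<in> D" using fin False m0_def by simp
  have cd: "card (D - {m0}) = card D - 1" using m0D fin by simp
  have cpos: "card D > 0" using fin False by (simp add: card_gt_0_iff)
  have "card (HS M D) = card (TS (D - {m0}))" unfolding e by (rule card_image) (simp add: inj_on_def)
  also have "\<dots> = Mz (card (D - {m0}))"
    using IH[rule_format, of "D - {m0}"] fin cd cpos by simp
  finally show ?thesis unfolding Hh_def using cd cpos by simp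
qed

lemma card_TS: "finite S \<Longrightarrow> card (TS S) = Mz (card S)"
proof (induction "card S" arbitrary: S rule: less_induct)
  case less
  show ?case
  proof (cases "S = {}")
    case True
    then show ?thesis by (simp add: TS_empty)
  next
    case False
    define M where "M = Max S"
    define l where "l = sorted_list_of_set (S - {M})"
    define m where "m = length l"
    have MS: "M \<in> S" and lt: "\<forall>x\<in>S - {M}. x < M" using max_facts[OF less(2) False M_def] by auto
    have sl: "sorted_wrt (<) l" "set l = S - {M}" "distinct l" "length l = card (S - {M})"
      using sl_facts[of "S - {M}" l] less(2) l_def by auto
    have cS: "card S = Suc m" using sl(4) MS less(2) unfolding m_def
      by (metis card_Suc_Diff1)
    have IH: "\<forall>S'. finite S' \<and> card S' < card S \<longrightarrow> card (TS S') = Mz (card S')" using less(1) by blast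
    have e: "TS S = (\<Union>k\<in>{..m}. {xs @ M # ys | xs ys. xs \<in> TS (set (take k l)) \<and> ys \<in> HS M (set (drop k l))})"
      using TS_decomp[OF less(2) False M_def l_def] unfolding m_def .
    have "card (TS S) = (\<Sum>k\<in>{..m}. card (TS (set (take k l))) * card (HS M (set (drop k l))))"
      unfolding e
    proof (rule card_UN_concat[where \<phi> = id])
      show "\<forall>k\<in>{..m}. \<forall>xs\<in>TS (set (take k l)). length xs = id k \<and> M \<notin> set xs"
      proof (intro ballI)
        fix k xs assume k: "k \<in> {..m}" and xs: "xs \<in> TS (set (take k l))"
        have "set xs = set (take k l)" "distinct xs" using xs unfolding TS_def permutations_of_set_def by auto
        moreover have "card (set (take k l)) = k" using take_drop_facts(4)[OF sl(1) sl(3)] k unfolding m_def by simp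
        moreover have "M \<notin> set (take k l)"
        proof
          assume "M \<in> set (take k l)"
          then have "M \<in> set l" by (rule in_set_takeD)
          then show False using sl(2) by simp
        qed
        ultimately show "length xs = id k \<and> M \<notin> set xs" by (metis distinct_card id_apply)
      qed
    qed (auto simp: finite_TS finite_HS)
    also have "\<dots> = (\<Sum>k\<in>{..m}. Mz k * Hh (m - k))"
    proof (rule sum.cong)
      fix k assume k: "k \<in> {..m}"
      have c1: "card (set (take k l)) = k" using take_drop_facts(4)[OF sl(1) sl(3)] k unfolding m_def by simp
      have c2: "card (set (drop k l)) = m - k" using take_drop_facts(5)[OF sl(1) sl(3)] k unfolding m_def by simp
      have "card (TS (set (take k l))) = Mz k" using IH[rule_format, of "set (take k l)"] c1 cS k by simp
      moreover have "card (HS M (set (drop k l))) = Hh (m - k)"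
      proof -
        have "\<forall>x\<in>set (drop k l). x < M"
        proof
          fix x assume "x \<in> set (drop k l)"
          then have "x \<in> set l" by (rule in_set_dropD)
          then show "x < M" using lt sl(2) by simp
        qed
        moreover have "\<forall>S'. finite S' \<and> card S' < card (set (drop k l)) \<longrightarrow> card (TS S') = Mz (card S')"
        proof (intro allI impI)
          fix S' :: "nat set" assume "finite S' \<and> card S' < card (set (drop k l))"
          then have "finite S'" "card S' < card S" using c2 cS by auto
          then show "card (TS S') = Mz (card S')" using IH by blast
        qed
        ultimately show ?thesis using card_HS_gen[of "set (drop k l)" M] c2 by simp
      qed
      ultimately show "card (TS (set (take k l))) * card (HS M (set (drop k l))) = Mz k * Hh (m - k)" by simp
    qed simp
    also have "\<dots> = Mz (card S)" using cS Mz_conv[of m] by (simp add: atMost_def)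
    finally show ?thesis .
  qed
qed

lemma card_HS: "finite D \<Longrightarrow> \<forall>x\<in>D. x < M \<Longrightarrow> card (HS M D) = Hh (card D)"
  using card_HS_gen card_TS by blast

lemma card_GS: "finite S \<Longrightarrow> card (GS S) = Mz (card S)"
proof (induction "card S" arbitrary: S rule: less_induct)
  case less
  show ?case
  proof (cases "S = {}")
    case True
    then show ?thesis by (simp add: GS_empty)
  next
    case False
    define M where "M = Max S"
    define l where "l = sorted_list_of_set (S - {M})"
    define m where "m = length l"
    have MS: "M \<in> S" and lt: "\<forall>x\<in>S - {M}. x < M" using max_facts[OF less(2) False M_def] by auto
    have sl: "sorted_wrt (<) l" "set l = S - {M}" "distinct l" "length l = card (S - {M})"
      using sl_facts[of "S - {M}" l] less(2) l_def by auto
    have cS: "card S = Suc m" using sl(4) MS less(2) unfolding m_def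
      by (metis card_Suc_Diff1)
    have IH: "\<forall>S'. finite S' \<and> card S' < card S \<longrightarrow> card (GS S') = Mz (card S')" using less(1) by blast
    have e: "GS S = (\<Union>k\<in>{..m}. {xs @ M # ys | xs ys. xs \<in> rev ` HS M (set (drop k l)) \<and> ys \<in> GS (set (take k l))})"
      using GS_decomp[OF less(2) False M_def l_def] unfolding m_def .
    have "card (GS S) = (\<Sum>k\<in>{..m}. card (rev ` HS M (set (drop k l))) * card (GS (set (take k l))))"
      unfolding e
    proof (rule card_UN_concat[where \<phi> = "\<lambda>k. m - k"])
      show "\<forall>k\<in>{..m}. \<forall>xs\<in>rev ` HS M (set (drop k l)). length xs = m - k \<and> M \<notin> set xs"
      proof (intro ballI)
        fix k xs assume k: "k \<in> {..m}" and xs: "xs \<in> rev ` HS M (set (drop k l))"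
        then obtain u where u: "u \<in> HS M (set (drop k l))" "xs = rev u" by blast
        have "set xs = set (drop k l)" "distinct xs" using u unfolding HS_def permutations_of_set_def by auto
        moreover have "card (set (drop k l)) = m - k" using take_drop_facts(5)[OF sl(1) sl(3)] k unfolding m_def by simp
        moreover have "M \<notin> set (drop k l)"
        proof
          assume "M \<in> set (drop k l)"
          then have "M \<in> set l" by (rule in_set_dropD)
          then show False using sl(2) by simp
        qed
        ultimately show "length xs = m - k \<and> M \<notin> set xs" by (metis distinct_card)
      qed
      show "inj_on (\<lambda>k. m - k) {..m}" by (auto simp: inj_on_def)
    qed (auto simp: finite_GS finite_HS)
    also have "\<dots> = (\<Sum>k\<in>{..m}. Mz k * Hh (m - k))"
    proof (rule sum.cong)
      fix k assume k: "k \<in> {..m}"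
      have c1: "card (set (take k l)) = k" using take_drop_facts(4)[OF sl(1) sl(3)] k unfolding m_def by simp
      have c2: "card (set (drop k l)) = m - k" using take_drop_facts(5)[OF sl(1) sl(3)] k unfolding m_def by simp
      have "card (GS (set (take k l))) = Mz k" using IH[rule_format, of "set (take k l)"] c1 cS k by simp
      moreover have "card (rev ` HS M (set (drop k l))) = Hh (m - k)"
      proof -
        have "\<forall>x\<in>set (drop k l). x < M"
        proof
          fix x assume "x \<in> set (drop k l)"
          then have "x \<in> set l" by (rule in_set_dropD)
          then show "x < M" using lt sl(2) by simp
        qed
        then have "card (HS M (set (drop k l))) = Hh (m - k)" using card_HS c2 by simp
        moreover have "card (rev ` HS M (set (drop k l))) = card (HS M (set (drop k l)))"
          by (rule card_image) (simp add: inj_on_def)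
        ultimately show ?thesis by simp
      qed
      ultimately show "card (rev ` HS M (set (drop k l))) * card (GS (set (take k l))) = Mz k * Hh (m - k)" by simp
    qed simp
    also have "\<dots> = Mz (card S)" using cS Mz_conv[of m] by (simp add: atMost_def)
    finally show ?thesis .
  qed
qed

lemma Sort_eq: "Sort_set n contains_32_1 = GS {1..n}"
proof (rule set_eqI)
  fix \<tau>
  show "\<tau> \<in> Sort_set n contains_32_1 \<longleftrightarrow> \<tau> \<in> GS {1..n}"
  proof (cases "\<tau> \<in> permutations_of_set {1..n}")
    case False
    then show ?thesis unfolding Sort_set_def GS_def by simp
  next
    case True
    define w where "w = SC c321 \<tau>"
    have tp: "set \<tau> = {1..n}" "distinct \<tau>" using True unfolding permutations_of_set_def by auto
    have mw: "mset w = mset \<tau>" unfolding w_def by (rule sc_mset)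
    have dw: "distinct w" using mw tp(2) by (metis distinct_count_atmost_1 set_mset_mset)
    have mww: "mset (west_s w) = mset \<tau>" using mw west_mset by simp
    have dww: "distinct (west_s w)" using mww tp(2) by (metis distinct_count_atmost_1 set_mset_mset)
    have sww: "set (west_s w) = {1..<n+1}" using mww tp(1) by (metis atLeastLessThanSuc_atLeastAtMost Suc_eq_plus1 set_mset_mset)
    have "west_s w = [1..<n+1] \<longleftrightarrow> sorted (west_s w)"
    proof
      assume so: "sorted (west_s w)"
      have "set (west_s w) = set [1..<n+1]" using sww by (simp only: set_upt)
      then show "west_s w = [1..<n+1]"
        using sorted_distinct_set_unique[OF so dww sorted_upt distinct_upt] by blast
    next
      assume "west_s w = [1..<n+1]"
      then show "sorted (west_s w)" by (simp only: sorted_upt)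
    qed
    also have "\<dots> \<longleftrightarrow> \<not> has231 w" using west_iff[OF dw] .
    finally show ?thesis unfolding Sort_set_def GS_def w_def c321_eq using True by simp
  qed
qed

lemma card_Sort: "card (Sort_set n contains_32_1) = Mz n"
  unfolding Sort_eq using card_GS[of "{1..n}"] by simp



fun ok :: "int \<Rightarrow> int list \<Rightarrow> bool" where
  "ok h [] = True"
| "ok h (s # p) = (s \<in> {-1, 0, 1} \<and> 0 \<le> h + s \<and> ok (h + s) p)"

lemma all_le_Suc_split: "(\<forall>k\<le>Suc n. P k) = (P 0 \<and> (\<forall>k\<le>n. P (Suc k)))"
proof
  assume a: "\<forall>k\<le>Suc n. P k"
  show "P 0 \<and> (\<forall>k\<le>n. P (Suc k))" using a by simp
next
  assume a: "P 0 \<and> (\<forall>k\<le>n. P (Suc k))"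
  show "\<forall>k\<le>Suc n. P k"
  proof (intro allI impI)
    fix k assume "k \<le> Suc n"
    then show "P k" using a by (cases k) auto
  qed
qed

lemma ok_iff: "0 \<le> h \<Longrightarrow> ok h p \<longleftrightarrow> (set p \<subseteq> {-1, 0, 1} \<and> (\<forall>k\<le>length p. 0 \<le> h + sum_list (take k p)))"
proof (induction p arbitrary: h)
  case Nil then show ?case by simp
next
  case (Cons s p)
  have "(\<forall>k\<le>length (s # p). 0 \<le> h + sum_list (take k (s # p))) =
        (0 \<le> h \<and> (\<forall>k\<le>length p. 0 \<le> h + sum_list (take (Suc k) (s # p))))"
    using all_le_Suc_split[of "length p" "\<lambda>k. 0 \<le> h + sum_list (take k (s # p))"] by simp
  also have "\<dots> = (\<forall>k\<le>length p. 0 \<le> (h + s) + sum_list (take k p))" using Cons(2) by (simp add: add.assoc)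
  finally have e: "(\<forall>k\<le>length (s # p). 0 \<le> h + sum_list (take k (s # p))) = (\<forall>k\<le>length p. 0 \<le> (h + s) + sum_list (take k p))" .
  show ?case
  proof (cases "0 \<le> h + s")
    case True
    then show ?thesis using Cons(1)[OF True] e by auto
  next
    case False
    have "\<not> (\<forall>k\<le>length p. 0 \<le> (h + s) + sum_list (take k p))"
      using False by (metis le0 add_0_right sum_list.Nil take_0)
    then show ?thesis using False e by simp
  qed
qed

definition PP :: "nat \<Rightarrow> int list set" where
  "PP n = {p. length p = n \<and> ok 0 p \<and> sum_list p = 0}"

lemma motzkin_PP: "motzkin_paths n = PP n"
  unfolding motzkin_paths_def PP_def using ok_iff[of 0] by auto

lemma ok_app: "ok h (a @ b) \<longleftrightarrow> ok h a \<and> ok (h + sum_list a) b"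
  by (induction a arbitrary: h) (auto simp: add.assoc)

lemma ok_mono: "ok h p \<Longrightarrow> h \<le> h' \<Longrightarrow> ok h' p"
proof (induction p arbitrary: h h')
  case Nil then show ?case by simp
next
  case (Cons s p)
  then show ?case by auto
qed

lemma first_return:
  "0 \<le> c \<Longrightarrow> ok (c + 1) p \<Longrightarrow> c + 1 + sum_list p = 0 \<Longrightarrow>
   \<exists>q1 q2. p = q1 @ (-1) # q2 \<and> ok c q1 \<and> c + sum_list q1 = 0 \<and> ok 0 q2 \<and> sum_list q2 = 0"
proof (induction p arbitrary: c)
  case Nil then show ?case by simp
next
  case (Cons s p)
  have s: "s \<in> {-1, 0, 1}" "0 \<le> c + 1 + s" "ok (c + 1 + s) p" using Cons(3) by auto
  show ?case
  proof (cases "c = 0 \<and> s = -1")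
    case True
    then have "ok 0 p" "sum_list p = 0" using s(3) Cons(4) by auto
    then show ?thesis using True by (intro exI[of _ "[]"] exI[of _ p]) simp
  next
    case False
    have c': "0 \<le> c + s" using False s(1) Cons(2) by auto
    have "ok (c + s + 1) p" using s(3) by (simp add: add.commute add.left_commute)
    moreover have "c + s + 1 + sum_list p = 0" using Cons(4) by simp
    ultimately obtain q1 q2 where q: "p = q1 @ (-1) # q2" "ok (c + s) q1" "c + s + sum_list q1 = 0" "ok 0 q2" "sum_list q2 = 0"
      using Cons(1)[OF c'] by blast
    have "ok c (s # q1)" using s(1) c' q(2) by simp
    moreover have "c + sum_list (s # q1) = 0" using q(3) by simp
    ultimately show ?thesis using q by (intro exI[of _ "s # q1"] exI[of _ q2]) simp
  qed
qed

lemma fr_conv: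
  "ok 0 q1 \<Longrightarrow> sum_list q1 = 0 \<Longrightarrow> ok 0 q2 \<Longrightarrow> sum_list q2 = 0 \<Longrightarrow>
   ok 1 (q1 @ (-1) # q2) \<and> 1 + sum_list (q1 @ (-1) # q2) = 0"
  using ok_mono[of 0 q1 1] by (simp add: ok_app)

lemma no_early: "ok 0 (q @ (-1) # r) \<Longrightarrow> sum_list q = 0 \<Longrightarrow> False"
  by (simp add: ok_app)

lemma fr_unique:
  assumes "q1 @ (-1) # q2 = q1' @ (-1) # q2'" "ok 0 q1" "sum_list q1 = 0" "ok 0 q1'" "sum_list q1' = 0"
  shows "q1 = q1'"
proof -
  obtain us where us: "(q1 = q1' @ us \<and> us @ (-1) # q2 = (-1) # q2') \<or> (q1 @ us = q1' \<and> (-1) # q2 = us @ (-1) # q2')"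
    using assms(1) by (auto simp: append_eq_append_conv2)
  show ?thesis
  proof (cases "us = []")
    case True then show ?thesis using us by auto
  next
    case False
    then obtain us' where u: "us = (-1) # us'" using us by (cases us) auto
    then show ?thesis using us no_early[of q1' us'] no_early[of q1 us'] assms by auto
  qed
qed



lemma finite_PP: "finite (PP n)"
proof -
  have "PP n \<subseteq> {p. set p \<subseteq> {-1, 0, 1} \<and> length p = n}"
    unfolding PP_def using ok_iff[of 0] by auto
  moreover have "finite {p :: int list. set p \<subseteq> {-1, 0, 1} \<and> length p = n}"
    by (rule finite_lists_length_eq) simp
  ultimately show ?thesis by (rule finite_subset)
qed

lemma PP_0: "PP 0 = {[]}" unfolding PP_def by auto

lemma PP_Suc:
  "PP (Suc n) = (\<lambda>q. 0 # q) ` PP n \<union>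
     (\<Union>k\<in>{..<n}. {xs @ (-1) # ys | xs ys. xs \<in> (\<lambda>q. 1 # q) ` PP k \<and> ys \<in> PP (n - 1 - k)})"
proof (rule set_eqI, rule iffI)
  fix p assume "p \<in> PP (Suc n)"
  then have p: "length p = Suc n" "ok 0 p" "sum_list p = 0" unfolding PP_def by auto
  then obtain s rest where e: "p = s # rest" by (cases p) auto
  have s: "s \<in> {-1, 0, 1}" "0 \<le> s" "ok s rest" "length rest = n" "s + sum_list rest = 0" using p e by auto
  show "p \<in> (\<lambda>q. 0 # q) ` PP n \<union>
     (\<Union>k\<in>{..<n}. {xs @ (-1) # ys | xs ys. xs \<in> (\<lambda>q. 1 # q) ` PP k \<and> ys \<in> PP (n - 1 - k)})"
  proof (cases "s = 0")
    case True
    then have "rest \<in> PP n" unfolding PP_def using s by simp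
    then show ?thesis using e True by blast
  next
    case False
    then have s1: "s = 1" using s(1,2) by auto
    then have "ok (0 + 1) rest" "0 + 1 + sum_list rest = 0" using s by auto
    then obtain q1 q2 where q: "rest = q1 @ (-1) # q2" "ok 0 q1" "0 + sum_list q1 = 0" "ok 0 q2" "sum_list q2 = 0"
      using first_return[of 0 rest] by auto
    have len: "length q1 < n" "length q2 = n - 1 - length q1" using q(1) s(4) by auto
    have "q1 \<in> PP (length q1)" "q2 \<in> PP (n - 1 - length q1)" unfolding PP_def using q len by auto
    then have "p \<in> {xs @ (-1) # ys | xs ys. xs \<in> (\<lambda>q. 1 # q) ` PP (length q1) \<and> ys \<in> PP (n - 1 - length q1)}"
      using e s1 q(1) by (intro CollectI exI[of _ "1 # q1"] exI[of _ q2]) auto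
    then show ?thesis using len(1) by blast
  qed
next
  fix p assume "p \<in> (\<lambda>q. 0 # q) ` PP n \<union>
     (\<Union>k\<in>{..<n}. {xs @ (-1) # ys | xs ys. xs \<in> (\<lambda>q. 1 # q) ` PP k \<and> ys \<in> PP (n - 1 - k)})"
  then show "p \<in> PP (Suc n)"
  proof
    assume "p \<in> (\<lambda>q. 0 # q) ` PP n"
    then show ?thesis unfolding PP_def by auto
  next
    assume "p \<in> (\<Union>k\<in>{..<n}. {xs @ (-1) # ys | xs ys. xs \<in> (\<lambda>q. 1 # q) ` PP k \<and> ys \<in> PP (n - 1 - k)})"
    then obtain k q1 q2 where k: "k < n" and e: "p = (1 # q1) @ (-1) # q2" and q1: "q1 \<in> PP k" and q2: "q2 \<in> PP (n - 1 - k)"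
      by blast
    have q1': "length q1 = k" "ok 0 q1" "sum_list q1 = 0" using q1 unfolding PP_def by auto
    have q2': "length q2 = n - 1 - k" "ok 0 q2" "sum_list q2 = 0" using q2 unfolding PP_def by auto
    have f: "ok 1 (q1 @ (-1) # q2) \<and> 1 + sum_list (q1 @ (-1) # q2) = 0" using fr_conv q1' q2' by blast
    have "length p = Suc n" using e q1' q2' k by simp
    moreover have "ok 0 p" using e f by simp
    moreover have "sum_list p = 0" using e f by simp
    ultimately show ?thesis unfolding PP_def by simp
  qed
qed

lemma card_PP_Suc:
  "card (PP (Suc n)) = card (PP n) + (\<Sum>k<n. card (PP k) * card (PP (n - 1 - k)))"
proof -
  define A where "A = (\<lambda>q. (0::int) # q) ` PP n"
  define F where "F = (\<lambda>k. {xs @ (-1::int) # ys | xs ys. xs \<in> (\<lambda>q. 1 # q) ` PP k \<and> ys \<in> PP (n - 1 - k)})"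
  have e: "PP (Suc n) = A \<union> (\<Union>k\<in>{..<n}. F k)" unfolding A_def F_def by (rule PP_Suc)
  have cF: "card (F k) = card (PP k) * card (PP (n - 1 - k))" for k
  proof -
    have "card (F k) = card ((\<lambda>q. 1 # q) ` PP k) * card (PP (n - 1 - k))"
      unfolding F_def by (rule card_concat[where k = "Suc k"]) (auto simp: finite_PP, auto simp: PP_def)
    moreover have "card ((\<lambda>q. (1::int) # q) ` PP k) = card (PP k)" by (rule card_image) (simp add: inj_on_def)
    ultimately show ?thesis by simp
  qed
  have finF: "finite (F k)" for k
  proof -
    have "F k = (\<lambda>(xs, ys). xs @ (-1) # ys) ` (((\<lambda>q. 1 # q) ` PP k) \<times> PP (n - 1 - k))" unfolding F_def by auto
    then show ?thesis by (simp add: finite_PP)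
  qed
  have cU: "card (\<Union>k\<in>{..<n}. F k) = (\<Sum>k<n. card (F k))"
  proof (rule card_UN_disjoint)
    show "\<forall>i\<in>{..<n}. \<forall>j\<in>{..<n}. i \<noteq> j \<longrightarrow> F i \<inter> F j = {}"
    proof (intro ballI impI)
      fix i j assume ij: "i \<in> {..<n}" "j \<in> {..<n}" "i \<noteq> j"
      show "F i \<inter> F j = {}"
      proof (rule ccontr)
        assume "F i \<inter> F j \<noteq> {}"
        then obtain q1 q2 q1' q2' where w: "(1 # q1) @ (-1) # q2 = (1 # q1') @ (-1) # q2'"
          "q1 \<in> PP i" "q2 \<in> PP (n - 1 - i)" "q1' \<in> PP j" "q2' \<in> PP (n - 1 - j)"
          unfolding F_def by blast
        have "q1 @ (-1) # q2 = q1' @ (-1) # q2'" using w(1) by simp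
        moreover have "ok 0 q1" "sum_list q1 = 0" "ok 0 q1'" "sum_list q1' = 0" using w unfolding PP_def by auto
        ultimately have "q1 = q1'" using fr_unique by blast
        moreover have "length q1 = i" "length q1' = j" using w unfolding PP_def by auto
        ultimately show False using ij(3) by simp
      qed
    qed
  qed (simp_all add: finF)
  have hF: "\<forall>w\<in>F k. hd w = 1" for k unfolding F_def by auto
  have hA: "\<forall>w\<in>A. hd w = 0" unfolding A_def by auto
  have disj: "A \<inter> (\<Union>k\<in>{..<n}. F k) = {}"
  proof (rule ccontr)
    assume "A \<inter> (\<Union>k\<in>{..<n}. F k) \<noteq> {}"
    then obtain w k where "w \<in> A" "w \<in> F k" by blast
    then show False using hF hA by fastforce
  qed
  have cA: "card A = card (PP n)" unfolding A_def by (rule card_image) (simp add: inj_on_def)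
  have "card (PP (Suc n)) = card A + card (\<Union>k\<in>{..<n}. F k)"
  proof -
    have fA: "finite A" unfolding A_def by (simp add: finite_PP)
    have fU: "finite (\<Union>k\<in>{..<n}. F k)" using finF by simp
    show ?thesis unfolding e using card_Un_disjoint[OF fA fU disj] .
  qed
  then show ?thesis using cA cU cF by simp
qed

lemma card_PP: "card (PP n) = Mz n"
proof (induction n rule: less_induct)
  case (less n)
  show ?case
  proof (cases n)
    case 0 then show ?thesis by (simp add: PP_0)
  next
    case (Suc m)
    have "card (PP (Suc m)) = card (PP m) + (\<Sum>k<m. card (PP k) * card (PP (m - 1 - k)))" by (rule card_PP_Suc)
    also have "\<dots> = Mz m + (\<Sum>k<m. Mz k * Mz (m - 1 - k))"
      using less Suc by (intro arg_cong2[where f = "(+)"] sum.cong) auto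
    finally show ?thesis using Suc by simp
  qed
qed

lemma card_motzkin: "motzkin n = Mz n"
  unfolding motzkin_def motzkin_PP by (rule card_PP)


theorem mainTheorem6:
  fixes n :: nat
  assumes "n \<ge> 1"
  shows "card (Sort_set n contains_32_1) = motzkin n"
  using card_Sort[of n] card_motzkin[of n] by simp

end
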